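(* In the self-selection model below, assume: (i) $(\epsilon_y,\epsilon_c,\epsilon_u)$ is independent of $X$; (ii) Assumption 1: $\mathbb{E}[\epsilon_y\mid\epsilon_u]=\alpha_y\epsilon_u$ and $\mathbb{E}[\epsilon_c\mid\epsilon_u]=\alpha_c\epsilon_u$; (iii) Assumption 2: $\epsilon_u\sim\mathcal{N}(0,1)$; (iv) for all $x_i,x_j$, $\operatorname{sgn}(\psi(x_i)-\psi(x_j))=\operatorname{sgn}(\beta(x_i)-\beta(x_j))$ (as implied by full latent mediation and latent synchrony for $C$ and $U$), and there is an open interval $I$ containing $\psi(x)$ for all $x$ and a differentiable $G:I\to\mathbb{R}$ with $\beta(x)=G(\psi(x))$; (v) Assumption 3: $\alpha_y\psi>0$ for all $\psi\in I$; (vi) Assumption 4: $G'(\psi)\ge\alpha_c\big(1-\mathrm{Var}[\epsilon_u\mid\epsilon_u>-\psi]\big)$ for all $\psi\in I$. Then the confounded CAS $$\theta(x)=\mathbb{E}[Y\mid T=1,X=x]-\mathbb{E}[Y\mid T=0,X=x]$$ has a valid effect ordering interpretation: for all $x_i,x_j$, $\theta(x_i)>\theta(x_j)\iff\beta(x_i)>\beta(x_j)$.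
   Context: Self-selection model: $X$ is a random feature vector, $Y^0=\zeta(X)+\epsilon_y$, $C=\beta(X)+\epsilon_c$, $U=\psi(X)+\epsilon_u$, with functions $\zeta,\beta,\psi$ and mean-zero noise $\epsilon_y,\epsilon_c,\epsilon_u$. Treatment is self-selected, $T=\mathbf{1}\{U>0\}$, and the observed outcome is $Y=Y^0+TC$. $\beta(x)=\mathbb{E}[C\mid X=x]$ is the CATE. *)

theory Defs
  imports "HOL-Probability.Probability"
begin

definition cond_exp_event :: "'a measure \<Rightarrow> ('a \<Rightarrow> real) \<Rightarrow> ('a \<Rightarrow> bool) \<Rightarrow> real" where
  "cond_exp_event M f P =
     (\<integral>\<omega>. indicator {\<omega>\<in>space M. P \<omega>} \<omega> * f \<omega> \<partial>M) / measure M {\<omega>\<in>space M. P \<omega>}"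

definition cond_var_event :: "'a measure \<Rightarrow> ('a \<Rightarrow> real) \<Rightarrow> ('a \<Rightarrow> bool) \<Rightarrow> real" where
  "cond_var_event M f P = cond_exp_event M (\<lambda>\<omega>. (f \<omega> - cond_exp_event M f P)\<^sup>2) P"

text \<open>Self-selection model with the feature fixed at X = x:
  U = psi x + eps_u, T = 1{U > 0}, Y = (zeta x + eps_y) + T * (beta x + eps_c).\<close>
definition treat_at :: "('x \<Rightarrow> real) \<Rightarrow> ('a \<Rightarrow> real) \<Rightarrow> 'x \<Rightarrow> 'a \<Rightarrow> real" where
  "treat_at psi eu x \<omega> = (if psi x + eu \<omega> > 0 then 1 else 0)"

definition outcome_at :: "('x \<Rightarrow> real) \<Rightarrow> ('x \<Rightarrow> real) \<Rightarrow> ('x \<Rightarrow> real) \<Rightarrow>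
    ('a \<Rightarrow> real) \<Rightarrow> ('a \<Rightarrow> real) \<Rightarrow> ('a \<Rightarrow> real) \<Rightarrow> 'x \<Rightarrow> 'a \<Rightarrow> real" where
  "outcome_at zeta beta psi ey ec eu x \<omega> =
     (zeta x + ey \<omega>) + treat_at psi eu x \<omega> * (beta x + ec \<omega>)"

text \<open>Confounded CAS theta(x) = E[Y | T=1, X=x] - E[Y | T=0, X=x]; since the noise is
  independent of X, conditioning on X = x amounts to fixing the feature value x.\<close>
definition confounded_cas :: "'a measure \<Rightarrow> ('x \<Rightarrow> real) \<Rightarrow> ('x \<Rightarrow> real) \<Rightarrow> ('x \<Rightarrow> real) \<Rightarrow>
    ('a \<Rightarrow> real) \<Rightarrow> ('a \<Rightarrow> real) \<Rightarrow> ('a \<Rightarrow> real) \<Rightarrow> 'x \<Rightarrow> real" where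
  "confounded_cas M zeta beta psi ey ec eu x =
     cond_exp_event M (outcome_at zeta beta psi ey ec eu x) (\<lambda>\<omega>. treat_at psi eu x \<omega> = 1)
   - cond_exp_event M (outcome_at zeta beta psi ey ec eu x) (\<lambda>\<omega>. treat_at psi eu x \<omega> = 0)"

end

theory Submission
  imports Defs "HOL-Real_Asymp.Real_Asymp"
begin


abbreviation "phi \<equiv> std_normal_density"

lemma phi_pos: "phi x > 0"
  by (simp add: std_normal_density_def)

lemma phi_even: "phi (-x) = phi x"
  by (simp add: std_normal_density_def)

lemma phi_deriv: "(phi has_real_derivative (- x * phi x)) (at x)"
  unfolding std_normal_density_def
  by (auto intro!: derivative_eq_intros simp: power2_eq_square field_simps)

lemma phi_cont: "isCont phi x"
  using phi_deriv DERIV_isCont by blast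

lemma phi_cont_on: "continuous_on S phi"
  using phi_cont continuous_at_imp_continuous_on by blast

lemma phi_integrable: "integrable lborel phi"
  using integrable_std_normal_moment[of 0] by simp

lemma phi_set_integrable: "set_integrable lborel S phi" if "S \<in> sets borel"
  unfolding set_integrable_def using integrable_mult_indicator[OF _ phi_integrable] that by simp

lemma phi_interval_integrable: "interval_lebesgue_integrable lborel a b phi"
  unfolding interval_lebesgue_integrable_def by (auto intro!: phi_set_integrable)

definition Phi0 :: "real \<Rightarrow> real" where "Phi0 u = (LBINT y=0..u. phi y)"

lemma Phi0_deriv: "(Phi0 has_real_derivative phi u) (at u)"
proof -
  have "((\<lambda>u. LBINT y=ereal 0..ereal u. phi y) has_vector_derivative (phi u)) (at u within {-\<bar>u\<bar>-1..\<bar>u\<bar>+1})"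
    by (rule interval_integral_FTC2) (auto intro: phi_cont_on)
  moreover have "at u within {-\<bar>u\<bar>-1..\<bar>u\<bar>+1} = at u" by (rule at_within_Icc_at) auto
  ultimately show ?thesis unfolding Phi0_def has_real_derivative_iff_has_vector_derivative
    by (simp add: zero_ereal_def)
qed

definition qn :: "real \<Rightarrow> real" where "qn p = (LBINT x=ereal (-p)..\<infinity>. phi x)"

lemma qn_Phi0: "qn p = (LBINT x=ereal 0..\<infinity>. phi x) - Phi0 (-p)"
proof -
  have "(LBINT x=ereal (-p)..ereal 0. phi x) + (LBINT x=ereal 0..\<infinity>. phi x) = (LBINT x=ereal (-p)..\<infinity>. phi x)"
    by (rule interval_integral_sum) (rule phi_interval_integrable)
  then show ?thesis unfolding qn_def Phi0_def
    using interval_integral_endpoints_reverse[of "ereal (-p)" "ereal 0" phi]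
    by (simp add: zero_ereal_def)
qed

lemma qn_deriv: "(qn has_real_derivative phi p) (at p)"
proof -
  have d: "((\<lambda>p. Phi0 (-p)) has_real_derivative (phi (-p) * (-1))) (at p)"
    by (rule DERIV_chain2[OF Phi0_deriv]) (auto intro!: derivative_eq_intros)
  have "((\<lambda>p. (LBINT x=ereal 0..\<infinity>. phi x) - Phi0 (-p)) has_real_derivative (0 - (phi (-p) * (-1)))) (at p)"
    by (intro DERIV_diff d DERIV_const)
  then show ?thesis unfolding qn_Phi0[abs_def] by (simp add: phi_even)
qed

lemma qn_zero: "qn 0 = 1/2"
proof -
  have tot: "(LBINT x=-\<infinity>..\<infinity>. phi x) = 1"
    using integral_std_normal_moment_even[of 0]
    by (simp add: interval_lebesgue_integral_def set_lebesgue_integral_def)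
  have "(LBINT x=-\<infinity>..ereal 0. phi x) + (LBINT x=ereal 0..\<infinity>. phi x) = (LBINT x=-\<infinity>..\<infinity>. phi x)"
    by (rule interval_integral_sum) (rule phi_interval_integrable)
  moreover have "(LBINT x=-\<infinity>..ereal 0. phi x) = (LBINT x=ereal 0..\<infinity>. phi x)"
    using interval_integral_reflect[of "-\<infinity>" "ereal 0" phi] by (simp add: phi_even)
  ultimately show ?thesis using tot unfolding qn_def by simp
qed




definition wf :: "(real \<Rightarrow> real) \<Rightarrow> real \<Rightarrow> real" where
  "wf q p = phi p * (2 * q p - 1) - p * q p * (1 - q p)"

lemma S_pos:
  assumes qd: "\<And>p. (q has_real_derivative phi p) (at p)" and q0: "q 0 = 1/2" and p: "p > 0"
  shows "2 * q p - 1 - 2 * p * phi p > 0"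
proof -
  define S where "S p = 2 * q p - 1 - 2 * p * phi p" for p
  have dS: "(S has_real_derivative 2 * x\<^sup>2 * phi x) (at x)" for x
  proof -
    note d = DERIV_diff[OF DERIV_diff[OF DERIV_cmult[OF qd] DERIV_const] DERIV_mult[OF DERIV_cmult[OF DERIV_ident] phi_deriv]]
    show ?thesis unfolding S_def[abs_def]
      by (rule DERIV_cong[OF d]) (simp add: power2_eq_square algebra_simps)
  qed
  obtain z where z: "0 < z" "z < p" "S p - S 0 = (p - 0) * (2 * z\<^sup>2 * phi z)"
    using MVT2[of 0 p S "\<lambda>x. 2 * x\<^sup>2 * phi x"] p dS by blast
  have "S 0 = 0" using q0 by (simp add: S_def)
  moreover have "(p - 0) * (2 * z\<^sup>2 * phi z) > 0" using z p phi_pos by simp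
  ultimately show ?thesis using z by (simp add: S_def)
qed

lemma wf_pos:
  assumes qd: "\<And>p. (q has_real_derivative phi p) (at p)" and q0: "q 0 = 1/2"
    and qlim: "(q \<longlongrightarrow> 1) at_top" and p: "p > 0"
  shows "wf q p > 0"
proof -
  define f where "f p = wf q p / p" for p
  have df: "(f has_real_derivative - phi x * (2 * q x - 1 - 2 * x * phi x) / x\<^sup>2) (at x)" if x: "x > 0" for x
  proof -
    note d = DERIV_divide[OF DERIV_diff[OF DERIV_mult[OF phi_deriv DERIV_diff[OF DERIV_cmult[OF qd] DERIV_const]] DERIV_mult[OF DERIV_mult[OF DERIV_ident qd] DERIV_diff[OF DERIV_const qd]]] DERIV_ident, of x 2 1 1]
    show ?thesis unfolding f_def[abs_def] wf_def
      by (rule DERIV_cong[OF d]) (use x in \<open>simp_all add: power2_eq_square field_simps\<close>)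
  qed
  have dec: "f b < f a" if "0 < a" "a < b" for a b
  proof (rule DERIV_neg_imp_decreasing[OF \<open>a < b\<close>])
    fix x assume "a \<le> x" "x \<le> b"
    then have x: "x > 0" using that by simp
    have "- phi x * (2 * q x - 1 - 2 * x * phi x) / x\<^sup>2 < 0"
      using S_pos[OF qd q0 x] phi_pos[of x] x by (simp add: divide_neg_pos mult_pos_pos)
    then show "\<exists>y. DERIV f x :> y \<and> y < 0" using df[OF x] by blast
  qed
  have flim: "(f \<longlongrightarrow> 0) at_top"
  proof -
    have l1: "((\<lambda>p. phi p / p) \<longlongrightarrow> 0) at_top"
      unfolding std_normal_density_def by real_asymp
    have "((\<lambda>p. (phi p / p) * (2 * q p - 1) - q p * (1 - q p)) \<longlongrightarrow> 0 * (2 * 1 - 1) - 1 * (1 - 1)) at_top"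
      by (intro tendsto_intros l1 qlim)
    moreover have "eventually (\<lambda>p. (phi p / p) * (2 * q p - 1) - q p * (1 - q p) = f p) at_top"
      using eventually_gt_at_top[of 0] by eventually_elim (simp add: f_def wf_def field_simps)
    ultimately show ?thesis by (simp add: tendsto_cong)
  qed
  have "f (p + 1) \<ge> 0"
  proof (rule tendsto_upperbound[OF flim])
    show "\<forall>\<^sub>F x in at_top. f x \<le> f (p + 1)"
      using eventually_gt_at_top[of "p+1"] by eventually_elim (use p dec in \<open>auto intro: less_imp_le\<close>)
  qed simp
  moreover have "f p > f (p + 1)" using dec p by simp
  ultimately have "f p > 0" by simp
  then show ?thesis using p by (simp add: f_def zero_less_divide_iff)
qed




lemma wf_neg:
  assumes qd: "\<And>p. (q has_real_derivative phi p) (at p)" and q0: "q 0 = 1/2"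
    and qlim: "(q \<longlongrightarrow> 1) at_top" and qsym: "\<And>p. q (-p) = 1 - q p" and p: "p < 0"
  shows "wf q p < 0"
proof -
  have "wf q (-p) > 0" using wf_pos[OF qd q0 qlim] p by simp
  moreover have "wf q (-p) = - wf q p" unfolding wf_def qsym phi_even by (simp add: algebra_simps)
  ultimately show ?thesis by simp
qed

definition Fn :: "(real \<Rightarrow> real) \<Rightarrow> (real \<Rightarrow> real) \<Rightarrow> real \<Rightarrow> real \<Rightarrow> real \<Rightarrow> real" where
  "Fn G q ay ac p = G p + (ay + ac) * (phi p / q p) + ay * (phi p / (1 - q p))"

lemma Fn_mono:
  assumes qd: "\<And>p. (q has_real_derivative phi p) (at p)" and q0: "q 0 = 1/2"
    and qlim: "(q \<longlongrightarrow> 1) at_top" and qsym: "\<And>p. q (-p) = 1 - q p"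
    and q01: "\<And>p. 0 < q p \<and> q p < 1"
    and I_interval: "is_interval I"
    and G_diff: "\<forall>p\<in>I. G differentiable (at p)"
    and A3: "\<forall>p\<in>I. ay * p > 0"
    and A4: "\<forall>p\<in>I. deriv G p \<ge> ac * (p * phi p / q p + (phi p / q p)\<^sup>2)"
    and ab: "a \<in> I" "b \<in> I" "a < b"
  shows "Fn G q ay ac a < Fn G q ay ac b"
proof (rule DERIV_pos_imp_increasing[OF \<open>a < b\<close>])
  fix x assume "a \<le> x" "x \<le> b"
  then have xI: "x \<in> I" using I_interval ab unfolding is_interval_1 by blast
  have dG: "(G has_real_derivative deriv G x) (at x)"
    using G_diff xI DERIV_deriv_iff_real_differentiable by blast
  have qx: "0 < q x" "q x < 1" using q01 by auto
  note d = DERIV_add[OF DERIV_add[OF dG DERIV_cmult[OF DERIV_divide[OF phi_deriv qd]]]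
                     DERIV_cmult[OF DERIV_divide[OF phi_deriv DERIV_diff[OF DERIV_const qd]]]]
  define r' where "r' = (- x * phi x * q x - phi x * phi x) / (q x * q x)"
  define u' where "u' = (- x * phi x * (1 - q x) - phi x * (0 - phi x)) / ((1 - q x) * (1 - q x))"
  have "(Fn G q ay ac has_real_derivative deriv G x + (ay + ac) * r' + ay * u') (at x)"
    unfolding Fn_def[abs_def] r'_def u'_def
    by (rule DERIV_cong[OF d]) (use qx in auto)
  moreover have hru: "r' + u' = phi x * wf q x / (q x * (1 - q x))\<^sup>2"
  proof -
    have h1: "q x \<noteq> 0" "1 - q x \<noteq> 0" using qx by auto
    show ?thesis unfolding r'_def u'_def wf_def
      by (simp add: divide_simps h1 power2_eq_square) (use qx in \<open>simp add: algebra_simps\<close>)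
  qed
  moreover have hG: "deriv G x + ac * r' \<ge> 0"
  proof -
    have "r' = - (x * phi x / q x + (phi x / q x)\<^sup>2)"
      unfolding r'_def using qx by (simp add: field_simps power2_eq_square)
    moreover have "ac * (x * phi x / q x + (phi x / q x)\<^sup>2) \<le> deriv G x" using A4 xI by blast
    ultimately show ?thesis by (metis add.commute diff_ge_0_iff_ge minus_mult_right add_uminus_conv_diff)
  qed
  moreover have hpos: "ay * (phi x * wf q x / (q x * (1 - q x))\<^sup>2) > 0"
  proof -
    have "ay * wf q x > 0"
    proof (cases "x > 0")
      case True
      have "ay * x > 0" using A3 xI by blast
      then have "ay > 0" using True by (simp add: zero_less_mult_iff)
      then show ?thesis using wf_pos[OF qd q0 qlim True] by simp
    next
      case False
      then have "x < 0" using A3 xI by (cases "x = 0") auto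
      have "ay * x > 0" using A3 xI by blast
      then have "ay < 0" using \<open>x < 0\<close> by (simp add: zero_less_mult_iff)
      then show ?thesis using wf_neg[OF qd q0 qlim qsym \<open>x < 0\<close>] by (simp add: mult_neg_neg)
    qed
    moreover have "phi x / (q x * (1 - q x))\<^sup>2 > 0" using qx phi_pos[of x] by simp
    ultimately have "(ay * wf q x) * (phi x / (q x * (1 - q x))\<^sup>2) > 0" by (rule mult_pos_pos)
    then show ?thesis by (simp add: ac_simps times_divide_eq_right)
  qed
  moreover have "0 < deriv G x + (ay + ac) * r' + ay * u'"
  proof -
    have "ay * (r' + u') > 0" using hru hpos by simp
    moreover have "deriv G x + (ay + ac) * r' + ay * u' = (deriv G x + ac * r') + ay * (r' + u')"
      by (simp add: algebra_simps)
    ultimately show ?thesis using hG by linarith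
  qed
  ultimately show "\<exists>y. (Fn G q ay ac has_real_derivative y) (at x) \<and> 0 < y" by blast
qed




lemma LB_Ioi: fixes g :: "real \<Rightarrow> real" shows "(LBINT x=ereal a..\<infinity>. g x) = (\<integral>x. indicator {a<..} x * g x \<partial>lborel)"
  by (simp add: interval_lebesgue_integral_def set_lebesgue_integral_def)

lemma phi_lim0: "(phi \<longlongrightarrow> 0) at_top"
  unfolding std_normal_density_def by real_asymp

lemma xphi_lim0: "((\<lambda>x. x * phi x) \<longlongrightarrow> 0) at_top"
  unfolding std_normal_density_def by real_asymp

lemma set_integrable_moment: "set_integrable lborel S (\<lambda>x. phi x * x ^ k)" if "S \<in> sets borel"
  unfolding set_integrable_def using integrable_mult_indicator[OF _ integrable_std_normal_moment[of k]] that by simp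

lemma FTC1: "(LBINT x=ereal a..\<infinity>. x * phi x) = phi a"
proof -
  have "(LBINT x=ereal a..\<infinity>. x * phi x) = 0 - (- phi a)"
  proof (rule interval_integral_FTC_integrable[where F = "\<lambda>x. - phi x"])
    show "ereal a < \<infinity>" by simp
    show "((\<lambda>x. - phi x) has_vector_derivative x * phi x) (at x)" for x
      using DERIV_minus[OF phi_deriv[of x]] by (simp add: has_real_derivative_iff_has_vector_derivative[symmetric])
    show "isCont (\<lambda>x. x * phi x) x" for x by (intro continuous_intros phi_cont)
    show "set_integrable lborel (einterval (ereal a) \<infinity>) (\<lambda>x. x * phi x)"
      using set_integrable_moment[of "{a<..}" 1] by (simp add: mult.commute)
    show "(((\<lambda>x. - phi x) \<circ> real_of_ereal) \<longlongrightarrow> - phi a) (at_right (ereal a))"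
      unfolding ereal_tendsto_simps1 by (intro tendsto_intros isCont_tendsto_compose[OF phi_cont] tendsto_ident_at)
    show "(((\<lambda>x. - phi x) \<circ> real_of_ereal) \<longlongrightarrow> 0) (at_left \<infinity>)"
      unfolding ereal_tendsto_simps1 using tendsto_minus[OF phi_lim0] by simp
  qed
  then show ?thesis by simp
qed

lemma FTC2: "(LBINT x=ereal a..\<infinity>. (x\<^sup>2 - 1) * phi x) = a * phi a"
proof -
  have "(LBINT x=ereal a..\<infinity>. (x\<^sup>2 - 1) * phi x) = 0 - (- a * phi a)"
  proof (rule interval_integral_FTC_integrable[where F = "\<lambda>x. - x * phi x"])
    show "ereal a < \<infinity>" by simp
    show "((\<lambda>x. - x * phi x) has_vector_derivative (x\<^sup>2 - 1) * phi x) (at x)" for x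
    proof -
      have "((\<lambda>x. - x * phi x) has_real_derivative (-1) * phi x + (- x * phi x) * (- x)) (at x)"
        using DERIV_mult[OF DERIV_minus[OF DERIV_ident] phi_deriv[of x]] by (simp add: algebra_simps)
      then show ?thesis
        by (simp add: has_real_derivative_iff_has_vector_derivative[symmetric] power2_eq_square algebra_simps)
    qed
    show "isCont (\<lambda>x. (x\<^sup>2 - 1) * phi x) x" for x by (intro continuous_intros phi_cont)
    show "set_integrable lborel (einterval (ereal a) \<infinity>) (\<lambda>x. (x\<^sup>2 - 1) * phi x)"
    proof -
      have "set_integrable lborel {a<..} (\<lambda>x. phi x * x ^ 2 - phi x * x ^ 0)"
        by (intro set_integral_diff set_integrable_moment) auto
      then show ?thesis by (simp add: algebra_simps)
    qed
    show "(((\<lambda>x. - x * phi x) \<circ> real_of_ereal) \<longlongrightarrow> - a * phi a) (at_right (ereal a))"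
      unfolding ereal_tendsto_simps1 by (intro tendsto_intros isCont_tendsto_compose[OF phi_cont] tendsto_ident_at)
    show "(((\<lambda>x. - x * phi x) \<circ> real_of_ereal) \<longlongrightarrow> 0) (at_left \<infinity>)"
      unfolding ereal_tendsto_simps1 using tendsto_minus[OF xphi_lim0] by simp
  qed
  then show ?thesis by simp
qed




definition Sp :: "'a measure \<Rightarrow> ('a \<Rightarrow> real) \<Rightarrow> real \<Rightarrow> 'a set" where
  "Sp M eu a = {\<omega>\<in>space M. eu \<omega> > a}"

context
  fixes M :: "'a measure" and eu :: "'a \<Rightarrow> real"
  assumes P: "prob_space M" and eu_meas[measurable]: "eu \<in> borel_measurable M"
    and D: "distributed M lborel eu std_normal_density"
begin


lemma Sp_sets[measurable]: "Sp M eu a \<in> sets M"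
  unfolding Sp_def by measurable

lemma int_S:
  assumes h[measurable]: "h \<in> borel_measurable borel"
  shows "(\<integral>\<omega>. indicator (Sp M eu a) \<omega> * h (eu \<omega>) \<partial>M) = (LBINT x=ereal a..\<infinity>. h x * phi x)"
proof -
  have "(\<integral>\<omega>. indicator (Sp M eu a) \<omega> * h (eu \<omega>) \<partial>M) = (\<integral>\<omega>. (\<lambda>x. indicator {a<..} x * h x) (eu \<omega>) \<partial>M)"
    by (rule Bochner_Integration.integral_cong) (auto simp: indicator_def Sp_def)
  also have "\<dots> = (\<integral>x. phi x * (indicator {a<..} x * h x) \<partial>lborel)"
    by (rule distributed_integral[OF D, symmetric]) auto
  also have "\<dots> = (LBINT x=ereal a..\<infinity>. h x * phi x)"
    unfolding LB_Ioi by (simp add: ac_simps)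
  finally show ?thesis .
qed

lemma Sp_sub: "Sp M eu a \<subseteq> space M" by (auto simp: Sp_def)

lemma meas_Sp: "measure M (Sp M eu (-p)) = qn p"
  using int_S[of "\<lambda>x. 1" "-p"] Sp_sub[of "-p"] by (simp add: qn_def Int_absorb2)

lemma m_Sp: "(\<integral>\<omega>. indicator (Sp M eu (-p)) \<omega> * eu \<omega> \<partial>M) = phi p"
  using int_S[of "\<lambda>x. x" "-p"] FTC1[of "-p"] by (simp add: phi_even)

lemma s_Sp: "(\<integral>\<omega>. indicator (Sp M eu (-p)) \<omega> * (eu \<omega>)\<^sup>2 \<partial>M) = qn p - p * phi p"
proof -
  have "(\<integral>\<omega>. indicator (Sp M eu (-p)) \<omega> * (eu \<omega>)\<^sup>2 \<partial>M) = (LBINT x=ereal (-p)..\<infinity>. x\<^sup>2 * phi x)"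
    using int_S[of "\<lambda>x. x\<^sup>2" "-p"] by simp
  also have "\<dots> = (LBINT x=ereal (-p)..\<infinity>. (x\<^sup>2 - 1) * phi x + phi x)"
    by (simp add: algebra_simps)
  also have "\<dots> = (LBINT x=ereal (-p)..\<infinity>. (x\<^sup>2 - 1) * phi x) + (LBINT x=ereal (-p)..\<infinity>. phi x)"
  proof (rule interval_lebesgue_integral_add(2))
    show "interval_lebesgue_integrable lborel (ereal (-p)) \<infinity> (\<lambda>x. (x\<^sup>2 - 1) * phi x)"
    proof -
      have "set_integrable lborel {-p<..} (\<lambda>x. phi x * x ^ 2 - phi x * x ^ 0)"
        by (intro set_integral_diff set_integrable_moment) auto
      then show ?thesis unfolding interval_lebesgue_integrable_def by (simp add: algebra_simps)
    qed
    show "interval_lebesgue_integrable lborel (ereal (-p)) \<infinity> phi"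
      by (rule phi_interval_integrable)
  qed
  also have "\<dots> = qn p - p * phi p" unfolding FTC2 qn_def by (simp add: phi_even)
  finally show ?thesis .
qed

lemma cond_int:
  assumes ei: "integrable M e" and em[measurable]: "e \<in> borel_measurable M"
    and A1: "AE \<omega> in M. real_cond_exp M (vimage_algebra (space M) eu borel) e \<omega> = \<alpha> * eu \<omega>"
  shows "(\<integral>\<omega>. indicator (Sp M eu a) \<omega> * e \<omega> \<partial>M) = \<alpha> * (\<integral>\<omega>. indicator (Sp M eu a) \<omega> * eu \<omega> \<partial>M)"
proof -
  have fm: "finite_measure M" using P by (simp add: prob_space_def)
  have sa: "subalgebra M (vimage_algebra (space M) eu borel)"
    unfolding subalgebra_def using measurable_iff_sets[THEN iffD1, OF eu_meas] by auto
  interpret finite_measure_subalgebra M "vimage_algebra (space M) eu borel"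
    by (intro finite_measure_subalgebra.intro finite_measure_subalgebra_axioms.intro fm sa)
  have SF: "Sp M eu a \<in> sets (vimage_algebra (space M) eu borel)"
  proof -
    have "eu -` {a<..} \<inter> space M \<in> sets (vimage_algebra (space M) eu borel)"
      by (rule in_vimage_algebra) simp
    moreover have "eu -` {a<..} \<inter> space M = Sp M eu a" by (auto simp: Sp_def)
    ultimately show ?thesis by simp
  qed
  have "(\<integral>\<omega>. indicator (Sp M eu a) \<omega> * e \<omega> \<partial>M) = (\<integral>\<omega>. indicator (Sp M eu a) \<omega> * real_cond_exp M (vimage_algebra (space M) eu borel) e \<omega> \<partial>M)"
    using real_cond_exp_intA[OF ei SF] by (simp add: set_lebesgue_integral_def)
  also have "\<dots> = (\<integral>\<omega>. indicator (Sp M eu a) \<omega> * (\<alpha> * eu \<omega>) \<partial>M)"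
    by (rule integral_cong_AE) (use A1 in auto)
  also have "\<dots> = \<alpha> * (\<integral>\<omega>. indicator (Sp M eu a) \<omega> * eu \<omega> \<partial>M)"
    by (simp add: ac_simps)
  finally show ?thesis .
qed

end



lemma qn_sym: "qn (-p) = 1 - qn p"
proof -
  have "\<forall>x. ((\<lambda>p. qn p + qn (-p)) has_real_derivative 0) (at x)"
  proof
    fix x
    have "((\<lambda>p. qn p + qn (-p)) has_real_derivative phi x + phi (-x) * (-1)) (at x)"
      by (intro DERIV_add qn_deriv DERIV_chain2[OF qn_deriv]) (auto intro!: derivative_eq_intros)
    then show "((\<lambda>p. qn p + qn (-p)) has_real_derivative 0) (at x)" by (simp add: phi_even)
  qed
  from DERIV_isconst_all[OF this, of p 0] show ?thesis using qn_zero by simp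
qed

lemma qn_strict: assumes "a < b" shows "qn a < qn b"
  by (rule DERIV_pos_imp_increasing[OF assms]) (use qn_deriv phi_pos in blast)

context
  fixes M :: "'a measure" and eu :: "'a \<Rightarrow> real"
  assumes P: "prob_space M" and eu_meas[measurable]: "eu \<in> borel_measurable M"
    and D: "distributed M lborel eu std_normal_density"
begin

lemma qn_01: "0 < qn p \<and> qn p < 1"
proof -
  have b: "0 \<le> qn x \<and> qn x \<le> 1" for x
    using meas_Sp[OF P eu_meas D, of x] prob_space.prob_le_1[OF P] measure_nonneg by metis
  show ?thesis using b[of "p - 1"] b[of "p + 1"] qn_strict[of "p - 1" p] qn_strict[of p "p + 1"] by auto
qed

lemma eu_pow_int: "integrable M (\<lambda>\<omega>. (eu \<omega>) ^ k)"
  using distributed_integrable[OF D, of "\<lambda>x. x ^ k"] integrable_std_normal_moment[of k] by simp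

lemma ind_int:
  fixes f :: "'a \<Rightarrow> real"
  assumes "integrable M f"
  shows "integrable M (\<lambda>\<omega>. indicator (Sp M eu a) \<omega> * f \<omega>)"
  using integrable_mult_indicator[of "Sp M eu a" M f] Sp_sets[OF P eu_meas D] assms by simp

lemma fm: "finite_measure M" using P by (simp add: prob_space_def)

lemma qn_lim: "(qn \<longlongrightarrow> 1) at_top"
proof -
  have mills: "p * qn (-p) \<le> phi p" if p: "p > 0" for p
  proof -
    have "p * qn (-p) = (\<integral>\<omega>. indicator (Sp M eu p) \<omega> * p \<partial>M)"
      using meas_Sp[OF P eu_meas D, of "-p"] Sp_sub[OF P eu_meas D, of p] by (simp add: Int_absorb2)
    also have "\<dots> \<le> (\<integral>\<omega>. indicator (Sp M eu p) \<omega> * eu \<omega> \<partial>M)"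
    proof (rule integral_mono)
      show "integrable M (\<lambda>\<omega>. indicator (Sp M eu p) \<omega> * p)"
        by (rule ind_int) (simp add: finite_measure.integrable_const[OF fm])
      show "integrable M (\<lambda>\<omega>. indicator (Sp M eu p) \<omega> * eu \<omega>)"
        by (rule ind_int) (use eu_pow_int[of 1] in simp)
      show "indicator (Sp M eu p) \<omega> * p \<le> indicator (Sp M eu p) \<omega> * eu \<omega>" for \<omega>
        by (auto simp: indicator_def Sp_def)
    qed
    also have "\<dots> = phi p" using m_Sp[OF P eu_meas D, of "-p"] by (simp add: phi_even)
    finally show ?thesis .
  qed
  have l: "((\<lambda>p. phi p / p) \<longlongrightarrow> 0) at_top"
    unfolding std_normal_density_def by real_asymp
  have "((\<lambda>p. 1 - qn p) \<longlongrightarrow> 0) at_top"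
  proof (rule tendsto_sandwich[OF _ _ tendsto_const l])
    show "\<forall>\<^sub>F n in at_top. 0 \<le> 1 - qn n" using qn_01 by (simp add: less_imp_le)
    show "\<forall>\<^sub>F n in at_top. 1 - qn n \<le> phi n / n"
      using eventually_gt_at_top[of 0]
    proof eventually_elim
      case (elim n)
      then show ?case using mills[OF elim] qn_sym[of n] by (simp add: field_simps)
    qed
  qed
  then have "((\<lambda>p. 1 - (1 - qn p)) \<longlongrightarrow> 1 - 0) at_top" by (intro tendsto_intros)
  then show ?thesis by simp
qed

end



context
  fixes M :: "'a measure" and eu :: "'a \<Rightarrow> real"
  assumes P: "prob_space M" and eu_meas[measurable]: "eu \<in> borel_measurable M"
    and D: "distributed M lborel eu std_normal_density"
begin

lemma ind1_int: "integrable M (\<lambda>\<omega>. indicator (Sp M eu a) \<omega> * (1::real))"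
  by (rule ind_int[OF P eu_meas D]) (simp add: finite_measure.integrable_const[OF fm[OF P eu_meas D]])

lemma indeu_int: "integrable M (\<lambda>\<omega>. indicator (Sp M eu a) \<omega> * eu \<omega>)"
  by (rule ind_int[OF P eu_meas D]) (use eu_pow_int[OF P eu_meas D, of 1] in simp)

lemma indeu2_int: "integrable M (\<lambda>\<omega>. indicator (Sp M eu a) \<omega> * (eu \<omega>)\<^sup>2)"
  by (rule ind_int[OF P eu_meas D]) (use eu_pow_int[OF P eu_meas D, of 2] in simp)

lemma var_eq: "cond_var_event M eu (\<lambda>\<omega>. eu \<omega> > -p) = 1 - p * phi p / qn p - (phi p / qn p)\<^sup>2"
proof -
  define S where "S = Sp M eu (-p)"
  define q where "q = qn p"
  have q: "0 < q" "q < 1" using qn_01[OF P eu_meas D, of p] by (auto simp: q_def)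
  have set: "{\<omega>\<in>space M. eu \<omega> > -p} = S" by (simp add: S_def Sp_def)
  have mS: "measure M S = q" using meas_Sp[OF P eu_meas D] by (simp add: S_def q_def)
  have hc: "cond_exp_event M eu (\<lambda>\<omega>. eu \<omega> > -p) = phi p / q"
    unfolding cond_exp_event_def set mS using m_Sp[OF P eu_meas D, of p] by (simp add: S_def)
  define c where "c = phi p / q"
  have "(\<integral>\<omega>. indicator S \<omega> * (eu \<omega> - c)\<^sup>2 \<partial>M) =
      (\<integral>\<omega>. indicator S \<omega> * (eu \<omega>)\<^sup>2 - (2 * c) * (indicator S \<omega> * eu \<omega>) + c\<^sup>2 * (indicator S \<omega> * 1) \<partial>M)"
    by (rule Bochner_Integration.integral_cong) (auto simp: power2_eq_square algebra_simps)
  also have "\<dots> = (\<integral>\<omega>. indicator S \<omega> * (eu \<omega>)\<^sup>2 \<partial>M) - (2 * c) * (\<integral>\<omega>. indicator S \<omega> * eu \<omega> \<partial>M)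
      + c\<^sup>2 * (\<integral>\<omega>. indicator S \<omega> * 1 \<partial>M)"
  proof -
    have i2: "integrable M (\<lambda>\<omega>. indicator S \<omega> * (eu \<omega>)\<^sup>2)" unfolding S_def by (rule indeu2_int)
    have i1: "integrable M (\<lambda>\<omega>. indicator S \<omega> * eu \<omega>)" unfolding S_def by (rule indeu_int)
    have i0: "integrable M (\<lambda>\<omega>. indicator S \<omega> * (1::real))" unfolding S_def by (rule ind1_int)
    have i0': "integrable M (indicator S :: 'a \<Rightarrow> real)" using i0 by simp
    have "(\<integral>\<omega>. indicator S \<omega> * (eu \<omega>)\<^sup>2 - (2 * c) * (indicator S \<omega> * eu \<omega>) + c\<^sup>2 * (indicator S \<omega> * 1) \<partial>M)
       = (\<integral>\<omega>. indicator S \<omega> * (eu \<omega>)\<^sup>2 - (2 * c) * (indicator S \<omega> * eu \<omega>) \<partial>M) + (\<integral>\<omega>. c\<^sup>2 * (indicator S \<omega> * 1) \<partial>M)"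
      by (rule Bochner_Integration.integral_add) (auto intro!: Bochner_Integration.integrable_diff Bochner_Integration.integrable_mult_right i0 i0' i1 i2)
    also have "(\<integral>\<omega>. indicator S \<omega> * (eu \<omega>)\<^sup>2 - (2 * c) * (indicator S \<omega> * eu \<omega>) \<partial>M)
       = (\<integral>\<omega>. indicator S \<omega> * (eu \<omega>)\<^sup>2 \<partial>M) - (\<integral>\<omega>. (2 * c) * (indicator S \<omega> * eu \<omega>) \<partial>M)"
      by (rule Bochner_Integration.integral_diff) (auto intro!: Bochner_Integration.integrable_mult_right i1 i2)
    finally show ?thesis by simp
  qed
  also have "\<dots> = (q - p * phi p) - (2 * c) * phi p + c\<^sup>2 * q"
    using s_Sp[OF P eu_meas D, of p] m_Sp[OF P eu_meas D, of p] meas_Sp[OF P eu_meas D, of p] Sp_sub[OF P eu_meas D, of "-p"]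
    by (simp add: S_def q_def Int_absorb2)
  finally have I: "(\<integral>\<omega>. indicator S \<omega> * (eu \<omega> - c)\<^sup>2 \<partial>M) = (q - p * phi p) - (2 * c) * phi p + c\<^sup>2 * q" .
  have "cond_var_event M eu (\<lambda>\<omega>. eu \<omega> > -p) = ((q - p * phi p) - (2 * c) * phi p + c\<^sup>2 * q) / q"
    unfolding cond_var_event_def hc c_def[symmetric] by (simp only: cond_exp_event_def set mS I)
  also have "\<dots> = 1 - p * phi p / q - (phi p / q)\<^sup>2"
    using q unfolding c_def by (simp add: field_simps power2_eq_square)
  finally show ?thesis by (simp add: q_def)
qed

end



context
  fixes M :: "'a measure" and eu :: "'a \<Rightarrow> real"
  assumes P: "prob_space M" and eu_meas[measurable]: "eu \<in> borel_measurable M"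
    and D: "distributed M lborel eu std_normal_density"
begin

lemma int1:
  assumes ei: "integrable M e" and em[measurable]: "e \<in> borel_measurable M"
    and A1: "AE \<omega> in M. real_cond_exp M (vimage_algebra (space M) eu borel) e \<omega> = \<alpha> * eu \<omega>"
  shows "(\<integral>\<omega>. indicator (Sp M eu (-p)) \<omega> * e \<omega> \<partial>M) = \<alpha> * phi p"
  using cond_int[OF P eu_meas D ei em A1, of "-p"] m_Sp[OF P eu_meas D, of p] by simp

lemma theta_eq:
  fixes zeta beta psi :: "'x \<Rightarrow> real" and ey ec :: "'a \<Rightarrow> real"
  assumes eyi: "integrable M ey" and eym[measurable]: "ey \<in> borel_measurable M"
    and eci: "integrable M ec" and ecm[measurable]: "ec \<in> borel_measurable M"
    and ey_mean: "(\<integral>\<omega>. ey \<omega> \<partial>M) = 0"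
    and A1y: "AE \<omega> in M. real_cond_exp M (vimage_algebra (space M) eu borel) ey \<omega> = ay * eu \<omega>"
    and A1c: "AE \<omega> in M. real_cond_exp M (vimage_algebra (space M) eu borel) ec \<omega> = ac * eu \<omega>"
    and bG: "beta x = G (psi x)"
  shows "confounded_cas M zeta beta psi ey ec eu x = Fn G qn ay ac (psi x)"
proof -
  define p where "p = psi x"
  define S where "S = Sp M eu (-p)"
  define q where "q = qn p"
  have q: "0 < q" "q < 1" using qn_01[OF P eu_meas D, of p] by (auto simp: q_def)
  have Ssets: "S \<in> sets M" unfolding S_def by (rule Sp_sets[OF P eu_meas D])
  have Ssub: "S \<subseteq> space M" unfolding S_def by (rule Sp_sub[OF P eu_meas D])
  have set1: "{\<omega>\<in>space M. treat_at psi eu x \<omega> = 1} = S"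
    by (auto simp: S_def Sp_def treat_at_def p_def)
  have set0: "{\<omega>\<in>space M. treat_at psi eu x \<omega> = 0} = space M - S"
    by (auto simp: S_def Sp_def treat_at_def p_def)
  have mS: "measure M S = q" using meas_Sp[OF P eu_meas D, of p] by (simp add: S_def q_def)
  have mS0: "measure M (space M - S) = 1 - q"
    using prob_space.prob_compl[OF P Ssets] mS by simp
  have iy: "(\<integral>\<omega>. indicator S \<omega> * ey \<omega> \<partial>M) = ay * phi p"
    unfolding S_def by (rule int1[OF eyi eym A1y])
  have ic: "(\<integral>\<omega>. indicator S \<omega> * ec \<omega> \<partial>M) = ac * phi p"
    unfolding S_def by (rule int1[OF eci ecm A1c])
  have i0: "integrable M (\<lambda>\<omega>. indicator S \<omega> * (1::real))" unfolding S_def by (rule ind1_int[OF P eu_meas D])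
  have i0': "integrable M (indicator S :: 'a \<Rightarrow> real)" using i0 by simp
  have iyi: "integrable M (\<lambda>\<omega>. indicator S \<omega> * ey \<omega>)" unfolding S_def by (rule ind_int[OF P eu_meas D eyi])
  have ici: "integrable M (\<lambda>\<omega>. indicator S \<omega> * ec \<omega>)" unfolding S_def by (rule ind_int[OF P eu_meas D eci])
  have I1: "(\<integral>\<omega>. indicator S \<omega> * outcome_at zeta beta psi ey ec eu x \<omega> \<partial>M)
      = (zeta x + beta x) * q + ay * phi p + ac * phi p"
  proof -
    have "(\<integral>\<omega>. indicator S \<omega> * outcome_at zeta beta psi ey ec eu x \<omega> \<partial>M)
      = (\<integral>\<omega>. (zeta x + beta x) * indicator S \<omega> + indicator S \<omega> * ey \<omega> + indicator S \<omega> * ec \<omega> \<partial>M)"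
      by (rule Bochner_Integration.integral_cong)
         (auto simp: S_def Sp_def outcome_at_def treat_at_def p_def indicator_def algebra_simps)
    also have "\<dots> = (zeta x + beta x) * (\<integral>\<omega>. indicator S \<omega> \<partial>M) + (\<integral>\<omega>. indicator S \<omega> * ey \<omega> \<partial>M)
        + (\<integral>\<omega>. indicator S \<omega> * ec \<omega> \<partial>M)"
      using i0' iyi ici by simp
    also have "\<dots> = (zeta x + beta x) * q + ay * phi p + ac * phi p"
      using mS Ssub iy ic by (simp add: Int_absorb2)
    finally show ?thesis .
  qed
  have I0: "(\<integral>\<omega>. indicator (space M - S) \<omega> * outcome_at zeta beta psi ey ec eu x \<omega> \<partial>M)
      = zeta x * (1 - q) - ay * phi p"
  proof -
    have "(\<integral>\<omega>. indicator (space M - S) \<omega> * outcome_at zeta beta psi ey ec eu x \<omega> \<partial>M)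
      = (\<integral>\<omega>. zeta x * indicator (space M - S) \<omega> + (ey \<omega> - indicator S \<omega> * ey \<omega>) \<partial>M)"
      by (rule Bochner_Integration.integral_cong)
         (auto simp: S_def Sp_def outcome_at_def treat_at_def p_def indicator_def algebra_simps)
    also have "\<dots> = zeta x * (\<integral>\<omega>. indicator (space M - S) \<omega> \<partial>M) + ((\<integral>\<omega>. ey \<omega> \<partial>M) - (\<integral>\<omega>. indicator S \<omega> * ey \<omega> \<partial>M))"
    proof -
      have "integrable M (indicator (space M - S) :: 'a \<Rightarrow> real)"
        using finite_measure.integrable_const[OF fm[OF P eu_meas D], of "1::real"]
              integrable_mult_indicator[of "space M - S" M "\<lambda>_. 1::real"] Ssets by simp
      then show ?thesis using iyi eyi by simp
    qed
    also have "\<dots> = zeta x * (1 - q) - ay * phi p"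
      using mS0 iy ey_mean by (simp add: Int_absorb2)
    finally show ?thesis .
  qed
  have "confounded_cas M zeta beta psi ey ec eu x
      = ((zeta x + beta x) * q + ay * phi p + ac * phi p) / q - (zeta x * (1 - q) - ay * phi p) / (1 - q)"
    unfolding confounded_cas_def cond_exp_event_def set1 set0 I1 I0 mS mS0 ..
  also have "\<dots> = Fn G qn ay ac (psi x)"
  proof -
    have "beta x = G p" using bG by (simp add: p_def)
    then show ?thesis
      using q unfolding Fn_def q_def[symmetric] p_def[symmetric] by (simp add: field_simps)
  qed
  finally show ?thesis .
qed

end


theorem mainTheorem11:
  fixes M :: "'a measure" and Mx :: "'x measure" and X :: "'a \<Rightarrow> 'x"
    and zeta beta psi :: "'x \<Rightarrow> real"
    and ey ec eu :: "'a \<Rightarrow> real"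
    and alpha_y alpha_c :: real and I :: "real set" and G :: "real \<Rightarrow> real"
  assumes P: "prob_space M"
    and X_meas: "X \<in> measurable M Mx"
    and ey_meas: "ey \<in> borel_measurable M" and ec_meas: "ec \<in> borel_measurable M"
    and eu_meas: "eu \<in> borel_measurable M"
    and ey_int: "integrable M ey" and ec_int: "integrable M ec" and eu_int: "integrable M eu"
    and ey_mean: "(\<integral>\<omega>. ey \<omega> \<partial>M) = 0" and ec_mean: "(\<integral>\<omega>. ec \<omega> \<partial>M) = 0"
    and eu_mean: "(\<integral>\<omega>. eu \<omega> \<partial>M) = 0"
    and indep: "prob_space.indep_set M
        (sigma_sets (space M) {(\<lambda>\<omega>. (ey \<omega>, ec \<omega>, eu \<omega>)) -` A \<inter> space M | A. A \<in> sets (borel :: (real \<times> real \<times> real) measure)})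
        (sigma_sets (space M) {X -` A \<inter> space M | A. A \<in> sets Mx})"
    and A1y: "AE \<omega> in M. real_cond_exp M (vimage_algebra (space M) eu borel) ey \<omega> = alpha_y * eu \<omega>"
    and A1c: "AE \<omega> in M. real_cond_exp M (vimage_algebra (space M) eu borel) ec \<omega> = alpha_c * eu \<omega>"
    and A2: "distributed M lborel eu std_normal_density"
    and sgn_sync: "\<forall>xi xj. sgn (psi xi - psi xj) = sgn (beta xi - beta xj)"
    and I_open: "open I" and I_interval: "is_interval I"
    and psi_I: "\<forall>x. psi x \<in> I"
    and G_diff: "\<forall>p\<in>I. G differentiable (at p)"
    and beta_G: "\<forall>x. beta x = G (psi x)"
    and A3: "\<forall>p\<in>I. alpha_y * p > 0"
    and A4: "\<forall>p\<in>I. deriv G p \<ge> alpha_c * (1 - cond_var_event M eu (\<lambda>\<omega>. eu \<omega> > - p))"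
  shows "\<forall>xi xj. confounded_cas M zeta beta psi ey ec eu xi > confounded_cas M zeta beta psi ey ec eu xj
                 \<longleftrightarrow> beta xi > beta xj"
proof -
  have qd: "\<And>p. (qn has_real_derivative phi p) (at p)" by (rule qn_deriv)
  have q01: "\<And>p. 0 < qn p \<and> qn p < 1" by (rule qn_01[OF P eu_meas A2])
  have qlim: "(qn \<longlongrightarrow> 1) at_top" by (rule qn_lim[OF P eu_meas A2])
  have A4': "\<forall>p\<in>I. deriv G p \<ge> alpha_c * (p * phi p / qn p + (phi p / qn p)\<^sup>2)"
  proof
    fix p assume "p \<in> I"
    then have "deriv G p \<ge> alpha_c * (1 - cond_var_event M eu (\<lambda>\<omega>. eu \<omega> > - p))" using A4 by blast
    then show "deriv G p \<ge> alpha_c * (p * phi p / qn p + (phi p / qn p)\<^sup>2)"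
      unfolding var_eq[OF P eu_meas A2] by simp
  qed
  have mono: "Fn G qn alpha_y alpha_c a < Fn G qn alpha_y alpha_c b" if "a \<in> I" "b \<in> I" "a < b" for a b
    by (rule Fn_mono[OF qd qn_zero qlim qn_sym q01 I_interval G_diff A3 A4' that])
  have th: "confounded_cas M zeta beta psi ey ec eu x = Fn G qn alpha_y alpha_c (psi x)" for x
    by (rule theta_eq[OF P eu_meas A2 ey_int ey_meas ec_int ec_meas ey_mean A1y A1c]) (use beta_G in blast)
  show ?thesis
  proof (intro allI)
    fix xi xj
    have "Fn G qn alpha_y alpha_c (psi xi) > Fn G qn alpha_y alpha_c (psi xj) \<longleftrightarrow> psi xi > psi xj"
    proof
      assume h: "Fn G qn alpha_y alpha_c (psi xi) > Fn G qn alpha_y alpha_c (psi xj)"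
      show "psi xi > psi xj"
      proof (rule ccontr)
        assume "\<not> psi xi > psi xj"
        then have "psi xi < psi xj \<or> psi xi = psi xj" by auto
        then show False using mono[OF psi_I[rule_format] psi_I[rule_format], of xi xj] h by auto
      qed
    next
      assume "psi xi > psi xj"
      then show "Fn G qn alpha_y alpha_c (psi xi) > Fn G qn alpha_y alpha_c (psi xj)"
        using mono[OF psi_I[rule_format] psi_I[rule_format], of xj xi] by simp
    qed
    moreover have "psi xi > psi xj \<longleftrightarrow> beta xi > beta xj"
    proof -
      have "sgn (psi xi - psi xj) = sgn (beta xi - beta xj)" using sgn_sync by blast
      then show ?thesis by (metis diff_gt_0_iff_gt sgn_pos sgn_1_pos)
    qed
    ultimately show "confounded_cas M zeta beta psi ey ec eu xi > confounded_cas M zeta beta psi ey ec eu xj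
                 \<longleftrightarrow> beta xi > beta xj" using th by simp
  qed
qed

end
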